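(* Let $T\ge 3$ be an integer, let $M>1$, $\alpha\in(0,1)$ and $g(\alpha)\in(0,1)$, and set $g(0)=1$, $g(1)=0$. Let $x_1,\dots,x_T\in\{0,1\}$ (request arrivals) and let $c_1,\dots,c_T$ be real numbers with $0<c_{\min}\le c_t\le c_{\max}$ (rent costs). For a hosting sequence $r=(r_1,\dots,r_T)\in\{0,\alpha,1\}^T$ define its total cost $$C(r)=\sum_{t=1}^{T}\bigl(c_t r_t+g(r_t)x_t\bigr)+\sum_{t=1}^{T-1}M\,(r_{t+1}-r_t)^+ .$$ Let $r^*=(r^*_1,\dots,r^*_T)$ be an optimal offline hosting sequence, i.e. a minimizer of $C$ over all sequences in $\{0,\alpha,1\}^T$ (with the same prescribed initial value $r_1$ as the competing sequences). Let $(a,b)\in\{(0,\alpha),(0,1),(\alpha,1-\alpha)\}$ and let $2\le n\le m\le T-1$. If $r^*_{n-1}=a$, $r^*_t=a+b$ for all $n\le t\le m$, and $r^*_{m+1}=a$, then $$\bigl(g(a)-g(a+b)\bigr)\sum_{l=n}^{m}x_l\;\ge\; bM+b\sum_{l=n}^{m}c_l .$$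
   Context: This is the offline version of a partial service hosting problem at an edge server: in each time-slot $t$ a fraction $r_t\in\{0,\alpha,1\}$ of a service is hosted at the edge; hosting incurs rent $c_t r_t$, each request arriving in slot $t$ costs $g(r_t)$ to serve (the part not served at the edge), and increasing the hosted fraction from $r_t$ to $r_{t+1}$ incurs a fetch cost $M(r_{t+1}-r_t)^+$ (decreasing it is free). The offline optimal policy knows all $x_t$ and $c_t$ in advance and minimizes the total cost $C(r)$. *)

theory Defs
  imports Complex_Main
begin

definition total_cost ::
  "nat \<Rightarrow> real \<Rightarrow> (real \<Rightarrow> real) \<Rightarrow> (nat \<Rightarrow> real) \<Rightarrow> (nat \<Rightarrow> real) \<Rightarrow> (nat \<Rightarrow> real) \<Rightarrow> real" where
  "total_cost T M g x c r =
     (\<Sum>t\<in>{1..T}. c t * r t + g (r t) * x t)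
     + (\<Sum>t\<in>{1..<T}. M * max 0 (r (t+1) - r t))"

definition admissible :: "nat \<Rightarrow> real \<Rightarrow> (nat \<Rightarrow> real) \<Rightarrow> bool" where
  "admissible T \<alpha> r \<longleftrightarrow> (\<forall>t\<in>{1..T}. r t \<in> {0, \<alpha>, 1})"

end

theory Submission
  imports Defs
begin

theorem mainTheorem1:
  fixes T :: nat and M \<alpha> cmin cmax a b :: real and g :: "real \<Rightarrow> real"
    and x c rs :: "nat \<Rightarrow> real" and n m :: nat
  assumes "T \<ge> 3" and "M > 1" and "0 < \<alpha>" and "\<alpha> < 1"
    and "0 < g \<alpha>" and "g \<alpha> < 1" and "g 0 = 1" and "g 1 = 0"
    and "\<forall>t\<in>{1..T}. x t \<in> {0, 1}"
    and "0 < cmin" and "\<forall>t\<in>{1..T}. cmin \<le> c t \<and> c t \<le> cmax"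
    and "admissible T \<alpha> rs"
    and "\<forall>r. admissible T \<alpha> r \<and> r 1 = rs 1 \<longrightarrow> total_cost T M g x c rs \<le> total_cost T M g x c r"
    and "(a, b) \<in> {(0, \<alpha>), (0, 1), (\<alpha>, 1 - \<alpha>)}"
    and "2 \<le> n" and "n \<le> m" and "m \<le> T - 1"
    and "rs (n - 1) = a" and "\<forall>t\<in>{n..m}. rs t = a + b" and "rs (m + 1) = a"
  shows "(g a - g (a + b)) * (\<Sum>l\<in>{n..m}. x l) \<ge> b * M + b * (\<Sum>l\<in>{n..m}. c l)"
proof -
  note A = assms
  have bpos: "b > 0" and aa: "a \<in> {0, \<alpha>, 1}" using A(3,4,14) by auto
  have gab: "g a - g (a + b) = g a - g (a+b)" by simp
  define r' where "r' t = (if t \<in> {n..m} then a else rs t)" for t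
  have adm: "admissible T \<alpha> r'" using A(12) aa unfolding admissible_def r'_def by auto
  have r1: "r' 1 = rs 1" using A(15) unfolding r'_def by auto
  have le: "total_cost T M g x c rs \<le> total_cost T M g x c r'" using A(13) adm r1 by blast
  have s1: "(\<Sum>t\<in>{1..T}. c t * rs t + g (rs t) * x t) - (\<Sum>t\<in>{1..T}. c t * r' t + g (r' t) * x t)
      = (\<Sum>t\<in>{1..T}. (c t * rs t + g (rs t) * x t) - (c t * r' t + g (r' t) * x t))"
    by (simp add: sum_subtractf)
  also have "\<dots> = (\<Sum>t\<in>{n..m}. (c t * rs t + g (rs t) * x t) - (c t * r' t + g (r' t) * x t))"
  proof (rule sum.mono_neutral_right)
    show "finite {1..T}" by simp
    show "{n..m} \<subseteq> {1..T}" using A(15,17) by auto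
    show "\<forall>i\<in>{1..T} - {n..m}. c i * rs i + g (rs i) * x i - (c i * r' i + g (r' i) * x i) = 0"
      by (auto simp: r'_def)
  qed
  also have "\<dots> = (\<Sum>t\<in>{n..m}. b * c t + (g (a+b) - g a) * x t)"
    by (rule sum.cong) (use A(19) in \<open>auto simp: r'_def algebra_simps\<close>)
  also have "\<dots> = b * (\<Sum>t\<in>{n..m}. c t) + (g (a+b) - g a) * (\<Sum>t\<in>{n..m}. x t)"
    by (simp add: sum.distrib sum_distrib_left)
  finally have s1' : "(\<Sum>t\<in>{1..T}. c t * rs t + g (rs t) * x t) - (\<Sum>t\<in>{1..T}. c t * r' t + g (r' t) * x t)
      = b * (\<Sum>t\<in>{n..m}. c t) + (g (a+b) - g a) * (\<Sum>t\<in>{n..m}. x t)" .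
  have pt: "M * max 0 (rs (t+1) - rs t) - M * max 0 (r' (t+1) - r' t) = (if t = n - 1 then M * b else 0)"
    if "t \<in> {1..<T}" for t
  proof -
    consider "t + 1 \<in> {n..m} \<and> t \<in> {n..m}" | "t = n - 1" | "t = m" | "t + 1 \<notin> {n..m} \<and> t \<notin> {n..m}"
      by force
    then show ?thesis
    proof cases
      case 1 then show ?thesis using A(15,19) by (auto simp: r'_def)
    next
      case 2 then show ?thesis using A(15,16,18,19) bpos by (auto simp: r'_def)
    next
      case 3 then show ?thesis using A(15,16,20,19) bpos by (auto simp: r'_def)
    next
      case 4 then show ?thesis using A(15,16) by (auto simp: r'_def)
    qed
  qed
  have "(\<Sum>t\<in>{1..<T}. M * max 0 (rs (t+1) - rs t)) - (\<Sum>t\<in>{1..<T}. M * max 0 (r' (t+1) - r' t))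
      = (\<Sum>t\<in>{1..<T}. M * max 0 (rs (t+1) - rs t) - M * max 0 (r' (t+1) - r' t))"
    by (simp add: sum_subtractf)
  also have "\<dots> = (\<Sum>t\<in>{1..<T}. if t = n - 1 then M * b else 0)"
    using pt by (rule sum.cong[OF refl])
  also have "\<dots> = M * b"
  proof -
    have "n - 1 \<in> {1..<T}" using A(1,15,16,17) by auto
    then show ?thesis by (simp add: sum.delta)
  qed
  finally have s2: "(\<Sum>t\<in>{1..<T}. M * max 0 (rs (t+1) - rs t)) - (\<Sum>t\<in>{1..<T}. M * max 0 (r' (t+1) - r' t)) = M * b" .
  show ?thesis using le s1' s2 unfolding total_cost_def by (simp add: algebra_simps)
qed

end
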